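(* Let $T$ be a finite full binary tree with $N\ge 2$ leaves and fringe thickness at most $2$, and let $m=\lceil\log_2 N\rceil$. For $\sigma\in\{0,1\}$ put $M=m-\sigma$, $c^{\sigma}_{\min}=(N-2^M)\sigma$ and $c^{\sigma}_{\max}=\lfloor (2N-2^M)/3\rfloor$. Then there exist $\sigma\in\{0,1\}$ and an integer $c$ with $c^\sigma_{\min}\le c\le c^\sigma_{\max}$ such that $T$ has exactly $2^M-N+c$ leaves at depth $M-1$, exactly $2N-2^M-3c$ leaves at depth $M$, exactly $2c$ leaves at depth $M+1$, and no other leaves. Conversely, for every such $(\sigma,c)$ these numbers are nonnegative and are the leaf-depth counts of some full binary tree $T_{\sigma,c}$.
   Context: A full binary tree is one in which every node is a leaf or has exactly two children. The fringe thickness of a finite tree is the maximum difference between the depths of any two of its leaves. *)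

theory Defs
  imports Complex_Main
begin

datatype fbtree = Leaf | Node fbtree fbtree

fun leaf_depths :: "fbtree \<Rightarrow> nat list" where
  "leaf_depths Leaf = [0]"
| "leaf_depths (Node l r) = map Suc (leaf_depths l @ leaf_depths r)"

definition num_leaves :: "fbtree \<Rightarrow> nat" where
  "num_leaves t = length (leaf_depths t)"

definition leaves_at :: "fbtree \<Rightarrow> int \<Rightarrow> int" where
  "leaves_at t d = int (length (filter (\<lambda>k. int k = d) (leaf_depths t)))"

definition fringe_thickness :: "fbtree \<Rightarrow> nat" where
  "fringe_thickness t = Max (set (leaf_depths t)) - Min (set (leaf_depths t))"

definition m_of :: "nat \<Rightarrow> int" where
  "m_of N = \<lceil>log 2 (real N)\<rceil>"

definition M_of :: "nat \<Rightarrow> nat \<Rightarrow> int" where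
  "M_of N \<sigma> = m_of N - int \<sigma>"

definition c_min :: "nat \<Rightarrow> nat \<Rightarrow> int" where
  "c_min N \<sigma> = (int N - 2 ^ nat (M_of N \<sigma>)) * int \<sigma>"

definition c_max :: "nat \<Rightarrow> nat \<Rightarrow> int" where
  "c_max N \<sigma> = \<lfloor>real_of_int (2 * int N - 2 ^ nat (M_of N \<sigma>)) / 3\<rfloor>"

definition has_profile :: "fbtree \<Rightarrow> nat \<Rightarrow> nat \<Rightarrow> int \<Rightarrow> bool" where
  "has_profile t N \<sigma> c \<longleftrightarrow>
     (let M = M_of N \<sigma> in
        leaves_at t (M - 1) = 2 ^ nat M - int N + c
      \<and> leaves_at t M = 2 * int N - 2 ^ nat M - 3 * c
      \<and> leaves_at t (M + 1) = 2 * c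
      \<and> (\<forall>d \<in> set (leaf_depths t). int d \<in> {M - 1, M, M + 1}))"

end

theory Submission
  imports Defs
begin

lemma ld_ne: "leaf_depths t \<noteq> []"
  by (induction t) auto

lemma kraft: "\<forall>d\<in>set (leaf_depths t). d \<le> D \<Longrightarrow> sum_list (map (\<lambda>d. (2::nat)^(D-d)) (leaf_depths t)) = 2^D"
proof (induction t arbitrary: D)
  case Leaf then show ?case by simp
next
  case (Node l r)
  obtain d0 where "d0 \<in> set (leaf_depths l)" using ld_ne[of l] by (cases "leaf_depths l") auto
  then have "Suc d0 \<le> D" using Node.prems by auto
  then obtain D' where D: "D = Suc D'" by (cases D) auto
  have l: "sum_list (map (\<lambda>d. (2::nat)^(D'-d)) (leaf_depths l)) = 2^D'"
    using Node.prems D by (intro Node.IH) auto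
  have r: "sum_list (map (\<lambda>d. (2::nat)^(D'-d)) (leaf_depths r)) = 2^D'"
    using Node.prems D by (intro Node.IH) auto
  show ?case using l r D by (simp add: comp_def)
qed

lemma cnt: "\<forall>d\<in>set xs. k \<le> d \<and> d \<le> k+2 \<Longrightarrow>
  sum_list (map (\<lambda>d. (2::nat)^(k+2-d)) xs) = 4*length(filter (\<lambda>d. d=k) xs) + 2*length(filter (\<lambda>d. d = k+1) xs) + length (filter (\<lambda>d. d=k+2) xs)
  \<and> length xs = length(filter (\<lambda>d. d=k) xs) + length(filter (\<lambda>d. d=k+1) xs) + length(filter(\<lambda>d. d=k+2) xs)"
proof (induction xs)
  case Nil then show ?case by simp
next
  case (Cons a xs)
  then have "a = k \<or> a = k+1 \<or> a = k+2" by auto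
  then show ?case using Cons by auto
qed

lemma mof: "2^j < N \<Longrightarrow> N \<le> 2^(Suc j) \<Longrightarrow> m_of N = int (Suc j)"
proof -
  assume a: "2^j < N" "N \<le> 2^(Suc j)"
  have N: "0 < N" using a by (metis gr0I not_less0)
  have a2: "real N \<le> 2^Suc j" using a(2) by (metis of_nat_le_iff of_nat_numeral of_nat_power)
  have "real j < log 2 (real N)"
    using a by (simp add: less_log_iff powr_realpow)
  moreover have "log 2 (real N) \<le> log 2 (2^Suc j)"
    using a2 N by (subst log_le_cancel_iff) (auto simp del: power_Suc)
  moreover have "log 2 ((2::real)^Suc j) = real (Suc j)" by (simp only: log_pow_cancel)
  ultimately show ?thesis unfolding m_of_def by (simp add: ceiling_eq_iff)
qed

lemma exj: "1 < (N::nat) \<Longrightarrow> \<exists>j. 2^j < N \<and> N \<le> 2^(Suc j)"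
proof -
  assume N: "1 < N"
  define j where "j = (LEAST i. N \<le> 2^Suc i)"
  have ex: "N \<le> 2^Suc N"
    by (metis less_exp less_imp_le_nat lessI order_trans less_Suc_eq_le power_increasing_iff one_less_numeral_iff semiring_norm(76) le_less)
  have 1: "N \<le> 2^Suc j" unfolding j_def by (rule LeastI[of _ N]) (rule ex)
  have 2: "2^j < N"
  proof (cases j)
    case 0 then show ?thesis using N by simp
  next
    case (Suc i)
    then have "\<not> N \<le> 2^Suc i" unfolding j_def by (metis Suc Suc_n_not_le_n j_def le_eq_less_or_eq lessI not_less_Least)
    then show ?thesis using Suc by simp
  qed
  show ?thesis using 1 2 by blast
qed

lemma fl1: "3*c \<le> (v::int) \<Longrightarrow> c \<le> \<lfloor>real_of_int v / 3\<rfloor>"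
  by (simp add: le_floor_iff)

lemma fl2: "c \<le> \<lfloor>real_of_int v / 3\<rfloor> \<Longrightarrow> 3*c \<le> (v::int)"
  by (simp add: le_floor_iff)

fun comp :: "nat \<Rightarrow> fbtree list \<Rightarrow> fbtree" where
"comp 0 ts = hd ts" |
"comp (Suc n) ts = Node (comp n (take (2^n) ts)) (comp n (drop (2^n) ts))"

lemma comp_ld: "length ts = 2^n \<Longrightarrow> leaf_depths (comp n ts) = concat (map (\<lambda>t. map (\<lambda>d. n + d) (leaf_depths t)) ts)"
proof (induction n arbitrary: ts)
  case 0
  then obtain t where "ts = [t]" by (cases ts) auto
  then show ?case by simp
next
  case (Suc n)
  have "length (take (2^n) ts) = 2^n" "length (drop (2^n) ts) = 2^n" using Suc.prems by auto
  then have "leaf_depths (comp (Suc n) ts) = map Suc (concat (map (\<lambda>t. map (\<lambda>d. n + d) (leaf_depths t)) (take (2^n) ts @ drop (2^n) ts)))"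
    using Suc.IH by (simp del: append_take_drop_id)
  also have "\<dots> = concat (map (\<lambda>t. map (\<lambda>d. Suc n + d) (leaf_depths t)) ts)"
    by (simp add: map_concat comp_def)
  finally show ?case .
qed

lemma lat: "leaves_at t (int n) = int (length (filter (\<lambda>j. j = n) (leaf_depths t)))"
  unfolding leaves_at_def by simp

lemma gadget: "p+q+r+s = 2^n \<Longrightarrow> \<exists>t. leaves_at t (int n) = int p \<and> leaves_at t (int (n+1)) = int (2*q+s)
   \<and> leaves_at t (int (n+2)) = int (4*r+2*s) \<and> (\<forall>d\<in>set(leaf_depths t). d = n \<or> d = n+1 \<or> d = n+2)"
proof -
  assume h: "p+q+r+s = 2^n"
  define ts where "ts = replicate p Leaf @ replicate q (Node Leaf Leaf) @ replicate r (Node (Node Leaf Leaf) (Node Leaf Leaf)) @ replicate s (Node Leaf (Node Leaf Leaf))"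
  have len: "length ts = 2^n" using h by (simp add: ts_def)
  have L: "leaf_depths (comp n ts) = concat (map (\<lambda>t. map (\<lambda>d. n + d) (leaf_depths t)) ts)"
    by (rule comp_ld[OF len])
  show ?thesis
    by (rule exI[of _ "comp n ts"], unfold lat L) (auto simp: ts_def filter_concat length_concat sum_list_triv sum_list_replicate)
qed

lemma forward:
  assumes N2: "num_leaves T \<ge> 2" and ft: "fringe_thickness T \<le> 2"
  shows "\<exists>\<sigma>\<in>{0,1}. \<exists>c. c_min (num_leaves T) \<sigma> \<le> c \<and> c \<le> c_max (num_leaves T) \<sigma> \<and> has_profile T (num_leaves T) \<sigma> c"
proof -
  define ds where "ds = leaf_depths T"
  define N where "N = num_leaves T"
  have ne: "ds \<noteq> []" unfolding ds_def by (rule ld_ne)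
  define k where "k = Min (set ds)"
  have kin: "k \<in> set ds" using ne by (simp add: k_def)
  have bnd: "\<forall>d\<in>set ds. k \<le> d \<and> d \<le> k+2"
  proof
    fix d assume d: "d \<in> set ds"
    have "d \<le> Max (set ds)" "Min (set ds) \<le> d" using d by auto
    moreover have "Max (set ds) - Min (set ds) \<le> 2" using ft by (simp add: fringe_thickness_def ds_def)
    ultimately show "k \<le> d \<and> d \<le> k+2" unfolding k_def by linarith
  qed
  define x where "x = length (filter (\<lambda>d. d = k) ds)"
  define y where "y = length (filter (\<lambda>d. d = k+1) ds)"
  define z where "z = length (filter (\<lambda>d. d = k+2) ds)"
  have C: "sum_list (map (\<lambda>d. (2::nat)^(k+2-d)) ds) = 4*x+2*y+z" "length ds = x+y+z"
    using cnt[OF bnd] unfolding x_def y_def z_def by auto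
  have "sum_list (map (\<lambda>d. (2::nat)^(k+2-d)) ds) = 2^(k+2)"
    unfolding ds_def by (rule kraft) (use bnd in \<open>auto simp: ds_def\<close>)
  then have K: "4*x+2*y+z = 4*2^k" using C by simp
  have L: "N = x+y+z" using C by (simp add: N_def num_leaves_def ds_def)
  have x1: "x \<ge> 1" using kin unfolding x_def by (metis (mono_tags) One_nat_def Suc_leI filter_empty_conv length_greater_0_conv)
  have lx: "leaves_at T (int k) = int x" by (simp add: lat x_def ds_def)
  have ly: "leaves_at T (int (k+1)) = int y" unfolding lat y_def ds_def by simp
  have lz: "leaves_at T (int (k+2)) = int z" unfolding lat z_def ds_def by simp
  have N2': "N \<ge> 2" using N2 by (simp add: N_def)
  show ?thesis
  proof (cases "y = 0 \<and> z = 0")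
    case True
    then have Nk: "N = 2^k" using K L by simp
    have k1: "k \<ge> 1" using Nk N2' by (cases k) auto
    then obtain i where ki: "k = Suc i" by (cases k) auto
    have "m_of N = int k" using Nk ki by (intro mof[of i, simplified ki[symmetric]]) auto
    then have M: "M_of N 0 = int k" by (simp add: M_of_def)
    have yz: "\<forall>d\<in>set ds. d = k"
    proof
      fix d assume d: "d \<in> set ds"
      have "filter (\<lambda>d. d = k+1) ds = []" using True unfolding y_def by simp
      then have "d \<noteq> k+1" using d by (simp add: filter_empty_conv)
      moreover have "filter (\<lambda>d. d = k+2) ds = []" using True unfolding z_def by simp
      then have "d \<noteq> k+2" using d by (simp add: filter_empty_conv)
      moreover have "k \<le> d \<and> d \<le> k+2" using bnd d by blast
      ultimately show "d = k" by linarith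
    qed
    have l0: "leaves_at T (int k - 1) = 0"
    proof -
      have "int k - 1 = int i" using ki by simp
      moreover have "filter (\<lambda>j. j = i) ds = []" using yz ki by (auto simp: filter_empty_conv)
      ultimately show ?thesis by (simp add: lat ds_def)
    qed
    have "has_profile T N 0 0"
    proof -
      have e2: "int k + 1 = int (k+1)" by simp
      have yz': "\<forall>d\<in>set (leaf_depths T). d = k" using yz by (simp add: ds_def)
      show ?thesis
        unfolding has_profile_def Let_def M nat_int e2 l0 lx ly
        using True Nk L yz' by simp
    qed
    moreover have "c_min N 0 \<le> 0" by (simp add: c_min_def)
    moreover have "0 \<le> c_max N 0" unfolding c_max_def M using Nk by (intro fl1) simp
    ultimately show ?thesis unfolding N_def by blast
  next
    case False
    have lo: "2^k < N" using False K L by linarith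
    have hi: "N \<le> 2^(k+2)" using K L x1 by simp
    have "even z" proof -
      have "even (4*x+2*y+z)" unfolding K by simp
      then show ?thesis by simp
    qed
    then obtain c where zc: "z = 2*c" by blast
    define \<sigma> where "\<sigma> = (if N \<le> 2^(k+1) then 0 else (1::nat))"
    have M: "M_of N \<sigma> = int k + 1"
    proof (cases "N \<le> 2^(k+1)")
      case True
      then show ?thesis using mof[of k N] lo by (simp add: M_of_def \<sigma>_def)
    next
      case False
      then show ?thesis using mof[of "k+1" N] hi by (simp add: M_of_def \<sigma>_def)
    qed
    have nM: "nat (int k + 1) = k+1" by simp
    have e1: "int k + 1 - 1 = int k" by simp
    have e2: "int k + 1 = int (k+1)" by simp
    have e3: "int k + 1 + 1 = int (k+2)" by simp
    have Ki: "4*int x+2*int y+int z = 4*2^k" using arg_cong[OF K, of int] by simp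
    have prof: "has_profile T N \<sigma> (int c)"
      unfolding has_profile_def Let_def M nM e1
      unfolding e3 unfolding e2 unfolding lx ly lz
      using Ki L zc bnd by (auto simp: ds_def)
    have cmin: "c_min N \<sigma> \<le> int c"
      unfolding c_min_def M nM using Ki L zc by (cases "N \<le> 2^(k+1)") (auto simp: \<sigma>_def)
    have cmax: "int c \<le> c_max N \<sigma>"
      unfolding c_max_def M nM using Ki L zc by (intro fl1) simp
    have "\<sigma> \<in> {0,1}" by (simp add: \<sigma>_def)
    then show ?thesis using prof cmin cmax unfolding N_def by blast
  qed
qed

lemma converse:
  assumes N2: "N \<ge> 2" and sg: "\<sigma> \<in> {0, 1}" and c1: "c_min N \<sigma> \<le> c" and c2: "c \<le> c_max N \<sigma>"
  shows "(let M = M_of N \<sigma> in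
               0 \<le> 2 ^ nat M - int N + c \<and> 0 \<le> 2 * int N - 2 ^ nat M - 3 * c \<and> 0 \<le> 2 * c)
            \<and> (\<exists>T. has_profile T N \<sigma> c)"
proof -
  obtain j where j: "2^j < N" "N \<le> 2^Suc j" using exj[of N] N2 by auto
  have jI: "2^j < int N" "int N \<le> 2^Suc j"
  proof -
    have "int (2^j) < int N" "int N \<le> int (2^Suc j)" using j by (simp only: of_nat_less_iff of_nat_le_iff)+
    then show "2^j < int N" "int N \<le> 2^Suc j" by simp_all
  qed
  have m: "m_of N = int (Suc j)" using mof[OF j] .
  define Mn where "Mn = Suc j - \<sigma>"
  have M: "M_of N \<sigma> = int Mn" using sg by (auto simp: M_of_def m Mn_def)
  have cmin: "(int N - 2^Mn) * int \<sigma> \<le> c" using c1 unfolding c_min_def M by simp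
  have cmax: "3*c \<le> 2 * int N - 2^Mn" using c2 unfolding c_max_def M by (intro fl2) simp
  have A: "0 \<le> 2^Mn - int N + c" and Cc: "0 \<le> c"
  proof -
    have "(0 \<le> 2^Mn - int N + c) \<and> 0 \<le> c"
    proof (cases "\<sigma> = 0")
      case True
      then show ?thesis using cmin jI by (simp add: Mn_def)
    next
      case False
      then have s1: "\<sigma> = 1" using sg by auto
      then have Mj: "Mn = j" by (simp add: Mn_def)
      have "int N - 2^j \<le> c" using cmin by (simp add: Mj s1)
      then show ?thesis unfolding Mj using jI(1) by linarith
    qed
    then show "0 \<le> 2^Mn - int N + c" "0 \<le> c" by auto
  qed
  have B: "0 \<le> 2 * int N - 2^Mn - 3*c" using cmax by simp
  have part1: "let M = M_of N \<sigma> in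
               0 \<le> 2 ^ nat M - int N + c \<and> 0 \<le> 2 * int N - 2 ^ nat M - 3 * c \<and> 0 \<le> 2 * c"
    unfolding Let_def M nat_int using A B Cc by simp
  have part2: "\<exists>T. has_profile T N \<sigma> c"
  proof (cases Mn)
    case 0
    then have s1: "\<sigma> = 1" and j0: "j = 0" using sg by (auto simp: Mn_def)
    then have "N = 2" using j by simp
    then have c: "c = 1" using cmin cmax 0 s1 by simp
    have "has_profile (Node Leaf Leaf) N \<sigma> c"
      unfolding has_profile_def Let_def M 0 using c \<open>N = 2\<close> by (simp add: leaves_at_def)
    then show ?thesis by blast
  next
    case (Suc n)
    define a where "a = nat (2^Mn - int N + c)"
    define b where "b = nat (2 * int N - 2^Mn - 3*c)"
    define cc where "cc = nat c"
    have ai: "int a = 2^Mn - int N + c" using A by (simp add: a_def)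
    have bi: "int b = 2 * int N - 2^Mn - 3*c" using B by (simp add: b_def)
    have ci: "int cc = c" using Cc by (simp add: cc_def)
    have kr: "2*a + b + cc = 2*2^n"
    proof -
      have "int (2*a + b + cc) = int (2*2^n)" using ai bi ci Suc by simp
      then show ?thesis by (simp only: of_nat_eq_iff)
    qed
    have par: "b mod 2 = cc mod 2" using kr by presburger
    have bd: "b = 2*(b div 2) + b mod 2" "cc = 2*(cc div 2) + cc mod 2" by simp_all
    have sum: "a + b div 2 + cc div 2 + b mod 2 = 2^n" using kr par bd by linarith
    obtain t where t: "leaves_at t (int n) = int a" "leaves_at t (int (n+1)) = int (2*(b div 2)+b mod 2)"
      "leaves_at t (int (n+2)) = int (4*(cc div 2)+2*(b mod 2))"
      "\<forall>d\<in>set(leaf_depths t). d = n \<or> d = n+1 \<or> d = n+2"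
      using gadget[OF sum] by blast
    have t2: "leaves_at t (int (n+1)) = int b" using t(2) bd(1) by simp
    have eq3: "4*(cc div 2)+2*(b mod 2) = 2*cc" using par bd by linarith
    have t3: "leaves_at t (int (n+2)) = int (2*cc)" using t(3) unfolding eq3 .
    have e1: "int (Suc n) - 1 = int n" by simp
    have e2: "int (Suc n) = int (n+1)" by simp
    have e3: "int (Suc n) + 1 = int (n+2)" by simp
    have "has_profile t N \<sigma> c"
      unfolding has_profile_def Let_def M Suc nat_int e1 e3 unfolding e2
      unfolding t(1) t2 t3
      using ai bi ci t(4) Suc by auto
    then show ?thesis by blast
  qed
  show ?thesis using part1 part2 by blast
qed

theorem lemma7:
  shows "(\<forall>T. num_leaves T \<ge> 2 \<and> fringe_thickness T \<le> 2 \<longrightarrow>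
            (\<exists>\<sigma> \<in> {0, 1}. \<exists>c. c_min (num_leaves T) \<sigma> \<le> c \<and> c \<le> c_max (num_leaves T) \<sigma>
                \<and> has_profile T (num_leaves T) \<sigma> c))
       \<and> (\<forall>N \<sigma> c. N \<ge> 2 \<and> \<sigma> \<in> {0, 1} \<and> c_min N \<sigma> \<le> c \<and> c \<le> c_max N \<sigma> \<longrightarrow>
            (let M = M_of N \<sigma> in
               0 \<le> 2 ^ nat M - int N + c \<and> 0 \<le> 2 * int N - 2 ^ nat M - 3 * c \<and> 0 \<le> 2 * c)
            \<and> (\<exists>T. has_profile T N \<sigma> c))"
  using forward converse by blast

end
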